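(* Let $X\subset\mathbb{R}^n$ be a finite set of points, let $\mathcal O$ be an order ideal and let $\mathcal B$ be an $\mathcal O$-border basis of the vanishing ideal $\mathcal I(X)$. Then for every $g\in\mathcal B$, $\mathfrak n_{\mathrm g}(g;X)\neq\boldsymbol 0$.
   Context: $\mathcal I(X)=\{g\in\mathbb{R}[x_1,\ldots,x_n]:g(\boldsymbol x)=0\ \forall\boldsymbol x\in X\}$. A term is a monomial $x_1^{a_1}\cdots x_n^{a_n}$. An order ideal $\mathcal O$ is a finite set of terms such that every term dividing an element of $\mathcal O$ belongs to $\mathcal O$. Its border is $\partial\mathcal O=\{x_ko:o\in\mathcal O,k=1,\ldots,n\}\setminus\mathcal O$. An $\mathcal O$-border basis of $\mathcal I(X)$ is a set of polynomials $\mathcal B\subset\mathcal I(X)$ generating $\mathcal I(X)$, each of the form $g=b-\sum_{o\in\mathcal O}c_oo$ with $b\in\partial\mathcal O$ and $c_o\in\mathbb R$, such that the residue classes of the terms of $\mathcal O$ form a basis of $\mathbb{R}[x_1,\ldots,x_n]/\mathcal I(X)$ (equivalently, the evaluation vectors of the terms of $\mathcal O$ at $X$ are linearly independent and span $\mathbb{R}^{|X|}$). $\mathfrak n_{\mathrm g}(g;X)=\mathrm{vec}(\nabla g(X))$, where $\nabla g(X)$ is the $|X|\times n$ matrix whose rows are the gradients of $g$ at the points of $X$. *)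

theory Defs
  imports "HOL-Analysis.Analysis" "HOL-Library.Poly_Mapping"
begin

text \<open>Multivariate real polynomials in the variables indexed by the finite type 'n:
  terms (monomials) are exponent vectors 'n => nat (finitely supported), polynomials are finitely
  supported maps from terms to real coefficients (with convolution product).\<close>

type_synonym 'n "term" = "'n \<Rightarrow>\<^sub>0 nat"
type_synonym 'n mpoly = "'n term \<Rightarrow>\<^sub>0 real"

definition term_poly :: "'n term \<Rightarrow> 'n mpoly" where
  "term_poly t = Poly_Mapping.single t 1"

definition term_eval :: "'n::finite term \<Rightarrow> real ^ 'n \<Rightarrow> real" where
  "term_eval t x = (\<Prod>i\<in>UNIV. (x $ i) ^ Poly_Mapping.lookup t i)"

definition peval :: "'n::finite mpoly \<Rightarrow> real ^ 'n \<Rightarrow> real" where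
  "peval p x = (\<Sum>t\<in>Poly_Mapping.keys p. Poly_Mapping.lookup p t * term_eval t x)"

definition vanishing_ideal :: "(real ^ 'n::finite) set \<Rightarrow> 'n mpoly set" where
  "vanishing_ideal X = {g. \<forall>x\<in>X. peval g x = 0}"

definition ideal_gen :: "'n mpoly set \<Rightarrow> 'n mpoly set" where
  "ideal_gen B = {p. \<exists>F h. finite F \<and> F \<subseteq> B \<and> p = (\<Sum>g\<in>F. h g * g)}"

definition term_dvd :: "'n term \<Rightarrow> 'n term \<Rightarrow> bool" where
  "term_dvd s t \<longleftrightarrow> (\<forall>i. Poly_Mapping.lookup s i \<le> Poly_Mapping.lookup t i)"

definition order_ideal :: "'n term set \<Rightarrow> bool" where
  "order_ideal \<O> \<longleftrightarrow> finite \<O> \<and> (\<forall>t\<in>\<O>. \<forall>s. term_dvd s t \<longrightarrow> s \<in> \<O>)"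

definition border :: "'n term set \<Rightarrow> 'n term set" where
  "border \<O> = {Poly_Mapping.single k 1 + u | u k. u \<in> \<O>} - \<O>"

definition is_border_basis :: "'n::finite term set \<Rightarrow> 'n mpoly set \<Rightarrow> (real ^ 'n) set \<Rightarrow> bool" where
  "is_border_basis \<O> B X \<longleftrightarrow>
     B \<subseteq> vanishing_ideal X \<and> ideal_gen B = vanishing_ideal X \<and>
     (\<forall>g\<in>B. \<exists>b\<in>border \<O>. \<exists>c. g = term_poly b - (\<Sum>u\<in>\<O>. Poly_Mapping.single u (c u))) \<and>
     (\<forall>c. (\<forall>x\<in>X. (\<Sum>u\<in>\<O>. c u * term_eval u x) = 0) \<longrightarrow> (\<forall>u\<in>\<O>. c u = 0)) \<and>
     (\<forall>v. \<exists>c. \<forall>x\<in>X. (\<Sum>u\<in>\<O>. c u * term_eval u x) = v x)"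

definition pgrad :: "'n::finite mpoly \<Rightarrow> real ^ 'n \<Rightarrow> real ^ 'n" where
  "pgrad p x = (\<chi> k. deriv (\<lambda>s. peval p (\<chi> i. if i = k then s else x $ i)) (x $ k))"

text \<open>n_g(g;X) = vec(grad g(X)) is the zero vector iff every gradient at every point of X is 0.
  We represent it as the matrix-valued map X \<rightarrow> R^n (row x is the gradient at x).\<close>
definition ngrad_zero :: "'n::finite mpoly \<Rightarrow> (real ^ 'n) set \<Rightarrow> bool" where
  "ngrad_zero g X \<longleftrightarrow> (\<forall>x\<in>X. \<forall>k. pgrad g x $ k = 0)"

end

theory Submission
  imports Defs
begin

lemma peval_eq:
  assumes "finite S" "\<And>t. t \<notin> S \<Longrightarrow> Poly_Mapping.lookup p t = 0"
  shows "peval p x = (\<Sum>t\<in>S. Poly_Mapping.lookup p t * term_eval t x)"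
  unfolding peval_def
proof (rule sum.mono_neutral_left)
  show "Poly_Mapping.keys p \<subseteq> S" using assms(2) by (auto simp: in_keys_iff)
  show "\<forall>i\<in>S - Poly_Mapping.keys p. Poly_Mapping.lookup p i * term_eval i x = 0"
    by (auto simp: in_keys_iff)
qed (use assms in auto)

lemma term_eval_split:
  "term_eval t y = (y $ k) ^ Poly_Mapping.lookup t k *
     (\<Prod>i\<in>UNIV - {k}. (y $ i) ^ Poly_Mapping.lookup t i)"
  unfolding term_eval_def by (simp add: prod.remove)

lemma te_deriv:
  fixes x :: "real ^ 'n::finite"
  shows "((\<lambda>s. term_eval t (\<chi> i. if i = k then s else x $ i)) has_real_derivative
     (real (Poly_Mapping.lookup t k) * term_eval (t - Poly_Mapping.single k 1) x)) (at (x $ k))"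
proof -
  define P where "P = (\<Prod>i\<in>UNIV - {k}. (x $ i) ^ Poly_Mapping.lookup t i)"
  have e: "term_eval t (\<chi> i. if i = k then s else x $ i) = s ^ Poly_Mapping.lookup t k * P" for s
    unfolding term_eval_split[of t _ k] P_def by (intro arg_cong2[where f="(*)"]) (auto intro!: prod.cong)
  have P2: "(\<Prod>i\<in>UNIV - {k}. (x $ i) ^ Poly_Mapping.lookup (t - Poly_Mapping.single k 1) i) = P"
    unfolding P_def by (intro prod.cong) (auto simp: lookup_minus lookup_single_not_eq)
  have d: "term_eval (t - Poly_Mapping.single k 1) x = (x $ k) ^ (Poly_Mapping.lookup t k - 1) * P"
    unfolding term_eval_split[of _ _ k] P2 by (simp add: lookup_minus)
  have "((\<lambda>s. s ^ Poly_Mapping.lookup t k * P) has_real_derivative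
      (real (Poly_Mapping.lookup t k) * (x $ k) ^ (Poly_Mapping.lookup t k - 1) * P)) (at (x $ k))"
    by (auto intro!: derivative_eq_intros)
  then show ?thesis unfolding e d by (simp add: mult.assoc)
qed

theorem proposition4:
  fixes X :: "(real ^ 'n::finite) set" and \<O> :: "'n term set" and B :: "'n mpoly set"
  assumes "finite X"
    and "order_ideal \<O>"
    and "is_border_basis \<O> B X"
    and "g \<in> B"
  shows "\<not> ngrad_zero g X"
proof
  assume nz: "ngrad_zero g X"
  have finO: "finite \<O>" and dcl: "\<And>t s. t \<in> \<O> \<Longrightarrow> term_dvd s t \<Longrightarrow> s \<in> \<O>"
    using assms(2) unfolding order_ideal_def by auto
  have indep: "\<And>c. (\<forall>x\<in>X. (\<Sum>u\<in>\<O>. c u * term_eval u x) = 0) \<Longrightarrow> (\<forall>u\<in>\<O>. c u = 0)"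
    using assms(3) unfolding is_border_basis_def by blast
  obtain b c where bB: "b \<in> border \<O>" and g: "g = term_poly b - (\<Sum>u\<in>\<O>. Poly_Mapping.single u (c u))"
    using assms(3,4) unfolding is_border_basis_def by blast
  obtain k o0 where o0: "o0 \<in> \<O>" and b: "b = Poly_Mapping.single k 1 + o0" and bO: "b \<notin> \<O>"
    using bB unfolding border_def by blast
  define ek :: "'n term" where "ek = Poly_Mapping.single k 1"
  have lg: "Poly_Mapping.lookup g t = (if t = b then 1 else 0) - (if t \<in> \<O> then c t else 0)" for t
    unfolding g term_poly_def lookup_minus lookup_sum lookup_single
    using finO by (auto simp: when_def sum.delta)
  have pe: "peval g y = term_eval b y - (\<Sum>u\<in>\<O>. c u * term_eval u y)" for y
  proof -
    have "peval g y = (\<Sum>t\<in>insert b \<O>. Poly_Mapping.lookup g t * term_eval t y)"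
      by (rule peval_eq) (use finO lg in auto)
    also have "\<dots> = term_eval b y + (\<Sum>t\<in>\<O>. Poly_Mapping.lookup g t * term_eval t y)"
      using finO bO lg[of b] by simp
    also have "(\<Sum>t\<in>\<O>. Poly_Mapping.lookup g t * term_eval t y) = (\<Sum>u\<in>\<O>. - (c u * term_eval u y))"
      by (rule sum.cong) (use bO lg in auto)
    finally show ?thesis by (simp add: sum_negf)
  qed
  define d where "d w = (if w + ek \<in> \<O> then c (w + ek) * real (Poly_Mapping.lookup (w + ek) k) else 0)" for w
  have bk: "Poly_Mapping.lookup b k = Poly_Mapping.lookup o0 k + 1"
    unfolding b by (simp add: lookup_add)
  have bmo: "b - ek = o0" unfolding b ek_def by simp
  have key: "(\<Sum>u\<in>\<O>. c u * (real (Poly_Mapping.lookup u k) * term_eval (u - ek) x))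
      = (\<Sum>w\<in>\<O>. d w * term_eval w x)" for x
  proof -
    have "(\<Sum>w\<in>\<O>. d w * term_eval w x) = (\<Sum>w\<in>{w\<in>\<O>. w + ek \<in> \<O>}. c (w + ek) * real (Poly_Mapping.lookup (w + ek) k) * term_eval w x)"
      unfolding d_def sum.inter_filter[OF finO] by (rule sum.cong) auto
    also have "\<dots> = (\<Sum>u\<in>(\<lambda>w. w + ek) ` {w\<in>\<O>. w + ek \<in> \<O>}. c u * (real (Poly_Mapping.lookup u k) * term_eval (u - ek) x))"
      by (subst sum.reindex) (simp_all add: inj_on_def mult.assoc)
    also have "(\<lambda>w. w + ek) ` {w\<in>\<O>. w + ek \<in> \<O>} = {u\<in>\<O>. Poly_Mapping.lookup u k \<noteq> 0}"
    proof (intro equalityI subsetI)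
      fix u assume "u \<in> (\<lambda>w. w + ek) ` {w\<in>\<O>. w + ek \<in> \<O>}"
      then show "u \<in> {u\<in>\<O>. Poly_Mapping.lookup u k \<noteq> 0}"
        by (auto simp: ek_def lookup_add)
    next
      fix u assume u: "u \<in> {u\<in>\<O>. Poly_Mapping.lookup u k \<noteq> 0}"
      have eq: "(u - ek) + ek = u"
        using u by (intro poly_mapping_eqI) (auto simp: ek_def lookup_add lookup_minus lookup_single when_def)
      have "u - ek \<in> \<O>"
        using u dcl[of u "u - ek"] unfolding term_dvd_def by (simp add: lookup_minus)
      then show "u \<in> (\<lambda>w. w + ek) ` {w\<in>\<O>. w + ek \<in> \<O>}"
        using u eq by (intro image_eqI[of _ _ "u - ek"]) auto
    qed
    also have "(\<Sum>u\<in>{u\<in>\<O>. Poly_Mapping.lookup u k \<noteq> 0}. c u * (real (Poly_Mapping.lookup u k) * term_eval (u - ek) x))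
       = (\<Sum>u\<in>\<O>. c u * (real (Poly_Mapping.lookup u k) * term_eval (u - ek) x))"
      using finO by (intro sum.mono_neutral_left) auto
    finally show ?thesis by simp
  qed
  define e where "e w = d w - (if w = o0 then real (Poly_Mapping.lookup b k) else 0)" for w
  have "\<forall>x\<in>X. (\<Sum>u\<in>\<O>. e u * term_eval u x) = 0"
  proof
    fix x assume x: "x \<in> X"
    have D: "((\<lambda>s. peval g (\<chi> i. if i = k then s else x $ i)) has_real_derivative
       (real (Poly_Mapping.lookup b k) * term_eval (b - ek) x -
        (\<Sum>u\<in>\<O>. c u * (real (Poly_Mapping.lookup u k) * term_eval (u - ek) x)))) (at (x $ k))"
      unfolding pe ek_def
      by (intro DERIV_diff DERIV_sum DERIV_cmult te_deriv)
    have "pgrad g x $ k = 0" using nz x unfolding ngrad_zero_def by blast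
    then have "real (Poly_Mapping.lookup b k) * term_eval o0 x - (\<Sum>w\<in>\<O>. d w * term_eval w x) = 0"
      unfolding pgrad_def using DERIV_imp_deriv[OF D] by (simp add: key bmo)
    moreover have "(\<Sum>u\<in>\<O>. e u * term_eval u x) = (\<Sum>w\<in>\<O>. d w * term_eval w x) - real (Poly_Mapping.lookup b k) * term_eval o0 x"
    proof -
      have "(\<Sum>u\<in>\<O>. e u * term_eval u x) = (\<Sum>u\<in>\<O>. d u * term_eval u x - (if u = o0 then real (Poly_Mapping.lookup b k) * term_eval o0 x else 0))"
        by (rule sum.cong) (auto simp: e_def algebra_simps)
      also have "\<dots> = (\<Sum>w\<in>\<O>. d w * term_eval w x) - real (Poly_Mapping.lookup b k) * term_eval o0 x"
        using finO o0 by (simp add: sum_subtractf sum.delta)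
      finally show ?thesis .
    qed
    ultimately show "(\<Sum>u\<in>\<O>. e u * term_eval u x) = 0" by simp
  qed
  then have "e o0 = 0" using indep o0 by blast
  moreover have "d o0 = 0" unfolding d_def using bO by (simp add: b ek_def add.commute)
  ultimately show False unfolding e_def using bk by simp
qed

end
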